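(* Let $q\equiv 3\pmod 4$ be a prime power. Suppose $E_0,E_1,E_2,E_3\subseteq\mathbb{F}_{q^2}$ satisfy $|E_i|=(q^2-q)/2$ for $i=0,1,2,3$, $\{E_0,E_1,E_2,E_3\}$ is a difference family of type $H$ in $(\mathbb{F}_{q^2},+)$, and in $\mathbb{Z}[(\mathbb{F}_{q^2},+)]$ $$E_0E_1^{(-1)}+E_1E_0^{(-1)}+E_2E_3^{(-1)}+E_3E_2^{(-1)}=(q-1)^2\,\mathbb{F}_{q^2}+2D_0-2D_2.$$ In $G=\mathbb{Z}_2\times(\mathbb{F}_{q^2},+)$ put $B_0=(\{0\}\times D_0)\cup(\{1\}\times(\mathbb{F}_{q^2}\setminus D_0))$, $B_1=(\{0\}\times D_2)\cup(\{1\}\times D_2)$, $B_2=(\{0\}\times E_0)\cup(\{1\}\times(\mathbb{F}_{q^2}\setminus E_1))$, $B_3=(\{0\}\times E_2)\cup(\{1\}\times(\mathbb{F}_{q^2}\setminus E_3))$. Then $\{B_0,B_1,B_2,B_3\}$ is a difference family with parameters $(2q^2;q^2,q^2-1,q^2,q^2;2q^2-2)$ in $G$.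
   Context: Let $\omega$ be a primitive element of $\mathbb{F}_{q^2}$, $C_i^{(N,q^2)}=\omega^i\langle\omega^N\rangle$ for $N\mid q^2-1$, and $D_i=C_i^{(4,q^2)}\cup C_{i+1}^{(4,q^2)}$. Subsets $X$ of an abelian group $G$ are identified with $\sum_{x\in X}x\in\mathbb{Z}[G]$, and $X^{(-1)}=\{-x:x\in X\}$. A collection $\{B_1,\dots,B_\ell\}$ of subsets of $G$ with $|B_i|=k_i$ is a difference family with parameters $(|G|;k_1,\dots,k_\ell;\lambda)$ if every nonzero element of $G$ occurs exactly $\lambda$ times among the differences $x-y$, $x,y\in B_i$, $x\ne y$, $i=1,\dots,\ell$; equivalently $\sum_i B_iB_i^{(-1)}=\lambda G+(\sum_i k_i-\lambda)\cdot 0_G$. A difference family with four blocks is of type $H$ if $\sum_{i=1}^4k_i-|G|=\lambda$. *)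

theory Defs
  imports Main "HOL-Library.Numeral_Type" "HOL-Library.Product_Plus" "HOL-Computational_Algebra.Primes"
begin

definition cyc_class :: "'a::field \<Rightarrow> nat \<Rightarrow> nat \<Rightarrow> 'a set" where
  "cyc_class w N i = {w ^ (i + N * j) | j. True}"

definition Dset :: "'a::field \<Rightarrow> nat \<Rightarrow> 'a set" where
  "Dset w i = cyc_class w 4 (i mod 4) \<union> cyc_class w 4 ((i + 1) mod 4)"

definition primitive_elem :: "'a::field \<Rightarrow> bool" where
  "primitive_elem w \<longleftrightarrow> w \<noteq> 0 \<and> (\<forall>x. x \<noteq> 0 \<longrightarrow> (\<exists>n. x = w ^ n))"

definition prime_power :: "nat \<Rightarrow> bool" where
  "prime_power q \<longleftrightarrow> (\<exists>p k. prime p \<and> k > 0 \<and> q = p ^ k)"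

text \<open>Coefficient of g in the group ring product X Y^(-1):
  number of pairs (x,y) in X x Y with x - y = g.\<close>
definition gr_coeff :: "'a::ab_group_add set \<Rightarrow> 'a set \<Rightarrow> 'a \<Rightarrow> nat" where
  "gr_coeff X Y g = card {(x, y). x \<in> X \<and> y \<in> Y \<and> x - y = g}"

definition difference_family :: "'a::{ab_group_add,finite} set list \<Rightarrow> nat \<Rightarrow> bool" where
  "difference_family Bs lam \<longleftrightarrow>
     (\<forall>g. g \<noteq> 0 \<longrightarrow>
        (\<Sum>B\<leftarrow>Bs. card {(x, y). x \<in> B \<and> y \<in> B \<and> x \<noteq> y \<and> x - y = g}) = lam)"

definition difference_family_params ::
  "'a::{ab_group_add,finite} set list \<Rightarrow> nat \<Rightarrow> nat list \<Rightarrow> nat \<Rightarrow> bool" where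
  "difference_family_params Bs v ks lam \<longleftrightarrow>
     CARD('a) = v \<and> length Bs = length ks \<and>
     (\<forall>i < length Bs. card (Bs ! i) = ks ! i) \<and> difference_family Bs lam"

definition type_H :: "'a::{ab_group_add,finite} set list \<Rightarrow> nat \<Rightarrow> bool" where
  "type_H Bs lam \<longleftrightarrow> length Bs = 4 \<and>
     int (\<Sum>B\<leftarrow>Bs. card B) - int CARD('a) = int lam"

end

theory Submission
  imports Defs "HOL-Number_Theory.Residues"
begin

lemma pow_period:
  fixes w :: "'a::{field,finite}"
  assumes prim: "primitive_elem w"
  defines "N \<equiv> CARD('a) - 1"
  shows "N > 0" and "w ^ a = w ^ b \<longleftrightarrow> a mod N = b mod N"
proof -
  have w0: "w \<noteq> 0" using prim by (simp add: primitive_elem_def)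
  have "\<not> inj (\<lambda>n::nat. w ^ n)"
  proof
    assume "inj (\<lambda>n::nat. w ^ n)"
    hence "finite (UNIV :: nat set)" using finite_imageD[of "\<lambda>n::nat. w ^ n" UNIV] by simp
    thus False by simp
  qed
  then obtain a0 b0 :: nat where ab: "w ^ a0 = w ^ b0" "a0 < b0"
    unfolding inj_def by (metis linorder_neqE_nat)
  have ex: "w ^ (b0 - a0) = 1 \<and> 0 < b0 - a0"
  proof -
    have "w ^ a0 * w ^ (b0 - a0) = w ^ (a0 + (b0 - a0))" by (simp add: power_add)
    also have "\<dots> = w ^ a0 * 1" using ab by simp
    finally have "w ^ a0 * w ^ (b0 - a0) = w ^ a0 * 1" .
    thus ?thesis using w0 ab by simp
  qed
  define m where "m = (LEAST m. 0 < m \<and> w ^ m = 1)"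
  have "0 < m \<and> w ^ m = 1" unfolding m_def by (rule LeastI_ex) (use ex in blast)
  hence m: "0 < m" "w ^ m = 1" by auto
  have mmin: "\<And>k. 0 < k \<Longrightarrow> k < m \<Longrightarrow> w ^ k \<noteq> 1"
    using not_less_Least m_def by blast
  have red: "\<And>n. w ^ n = w ^ (n mod m)"
  proof -
    fix n
    have "w ^ n = w ^ (m * (n div m) + n mod m)" by (simp only: mult_div_mod_eq)
    also have "\<dots> = w ^ (n mod m)" unfolding power_add power_mult m by simp
    finally show "w ^ n = w ^ (n mod m)" .
  qed
  have injm: "inj_on (\<lambda>i. w ^ i) {..<m}"
  proof (rule inj_onI)
    fix i j assume i: "i \<in> {..<m}" and j: "j \<in> {..<m}" and e: "w ^ i = w ^ j"
    show "i = j"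
    proof (rule ccontr)
      assume "i \<noteq> j"
      then consider "i < j" | "j < i" by linarith
      thus False
      proof cases
        case 1
        have "w ^ i * w ^ (j - i) = w ^ (i + (j - i))" by (simp add: power_add)
        also have "\<dots> = w ^ i * 1" using e 1 by simp
        finally have "w ^ i * w ^ (j - i) = w ^ i * 1" .
        hence "w ^ (j - i) = 1" using w0 by simp
        moreover have "j - i < m" using 1 j by simp
        ultimately show False using mmin[of "j - i"] 1 by simp
      next
        case 2
        have "w ^ j * w ^ (i - j) = w ^ (j + (i - j))" by (simp add: power_add)
        also have "\<dots> = w ^ j * 1" using e 2 by simp
        finally have "w ^ j * w ^ (i - j) = w ^ j * 1" .
        hence "w ^ (i - j) = 1" using w0 by simp
        moreover have "i - j < m" using 2 i by simp
        ultimately show False using mmin[of "i - j"] 2 by simp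
      qed
    qed
  qed
  have "UNIV - {0} \<subseteq> (\<lambda>i. w ^ i) ` {..<m}"
  proof
    fix x :: 'a assume "x \<in> UNIV - {0}"
    then obtain n where "x = w ^ n" using prim by (auto simp: primitive_elem_def)
    thus "x \<in> (\<lambda>i. w ^ i) ` {..<m}" using red[of n] m(1) by auto
  qed
  hence "card (UNIV - {0::'a}) \<le> card ((\<lambda>i. w ^ i) ` {..<m})" by (intro card_mono) auto
  hence "card (UNIV - {0::'a}) \<le> m"
    using card_image_le[of "{..<m}" "\<lambda>i. w ^ i"] by auto
  hence le1: "N \<le> m" by (simp add: N_def card_Diff_singleton)
  have "(\<lambda>i. w ^ i) ` {..<m} \<subseteq> UNIV - {0}" using w0 by auto
  hence "card ((\<lambda>i. w ^ i) ` {..<m}) \<le> card (UNIV - {0::'a})" by (intro card_mono) auto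
  hence le2: "m \<le> N" using card_image[OF injm] by (simp add: N_def card_Diff_singleton)
  have mN: "m = N" using le1 le2 by simp
  show "N > 0" using m mN by simp
  have "w ^ a = w ^ b \<longleftrightarrow> w ^ (a mod m) = w ^ (b mod m)" using red by metis
  also have "\<dots> \<longleftrightarrow> a mod m = b mod m"
    using injm m(1) by (auto dest: inj_onD)
  finally show "w ^ a = w ^ b \<longleftrightarrow> a mod N = b mod N" using mN by simp
qed

lemma card_by_inverse:
  assumes "\<And>x. x \<in> A \<Longrightarrow> f x \<in> B" "\<And>y. y \<in> B \<Longrightarrow> g y \<in> A"
    "\<And>x. x \<in> A \<Longrightarrow> g (f x) = x" "\<And>y. y \<in> B \<Longrightarrow> f (g y) = y"
  shows "card A = card B"
proof -
  have "bij_betw f A B"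
    by (rule bij_betwI') (metis assms)+
  thus ?thesis by (rule bij_betw_same_card)
qed


lemma card_pull:
  assumes "inj_on P A" "P ` A = UNIV"
  shows "card {x. Q x} = card {a \<in> A. Q (P a)}"
proof -
  have "{x. Q x} = P ` {a \<in> A. Q (P a)}" using assms(2) by auto
  moreover have "inj_on P {a \<in> A. Q (P a)}" using assms(1) by (rule inj_on_subset) auto
  ultimately show ?thesis by (simp add: card_image)
qed

lemma card_offdiag:
  assumes "finite R"
  shows "card {(u, v). u \<in> R \<and> v \<in> R \<and> u \<noteq> v} = card R * card R - card R"
proof -
  have "{(u, v). u \<in> R \<and> v \<in> R \<and> u \<noteq> v} = R \<times> R - (\<lambda>u. (u, u)) ` R" by auto
  moreover have "card ((\<lambda>u. (u, u)) ` R) = card R" by (rule card_image) (auto intro: inj_onI)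
  moreover have "(\<lambda>u. (u, u)) ` R \<subseteq> R \<times> R" by auto
  ultimately show ?thesis using assms by (simp add: card_Diff_subset card_cartesian_product)
qed

locale ffs =
  fixes w :: "'a::{field,finite}" and q :: nat
  assumes pp: "prime_power q" and q3: "q mod 4 = 3" and cardF: "CARD('a) = q^2"
    and prim: "primitive_elem w"
begin

lemma w0: "w \<noteq> 0" using prim by (simp add: primitive_elem_def)

lemma q_ge: "q \<ge> 3"
proof -
  have "q mod 4 \<le> q" by (rule mod_less_eq_dividend)
  thus ?thesis using q3 by simp
qed

lemma q_odd: "odd q" using q3 by presburger

lemma N_eq: "q^2 - 1 = (q - 1) * (q + 1)"
  using q_ge by (simp add: power2_eq_square algebra_simps)

lemma pw: "w ^ a = w ^ b \<longleftrightarrow> a mod (q^2 - 1) = b mod (q^2 - 1)"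
  using pow_period(2)[OF prim] cardF by simp

lemma four_dvd_N: "4 dvd (q^2 - 1)"
proof -
  have "4 dvd (q + 1)" using q3 by presburger
  hence "4 dvd ((q - 1) * (q + 1))" by (rule dvd_mult)
  thus ?thesis by (simp only: N_eq)
qed

lemma pw4: "w ^ a = w ^ b \<Longrightarrow> a mod 4 = b mod 4"
proof -
  assume "w ^ a = w ^ b"
  hence "a mod (q^2 - 1) = b mod (q^2 - 1)" using pw by simp
  hence "a mod (q^2 - 1) mod 4 = b mod (q^2 - 1) mod 4" by simp
  thus ?thesis using four_dvd_N by (simp add: mod_mod_cancel)
qed

lemma nz_pow: "x \<noteq> 0 \<Longrightarrow> \<exists>n. x = w ^ n"
  using prim by (simp add: primitive_elem_def)

lemma cyc_mem: "i < 4 \<Longrightarrow> x \<in> cyc_class w 4 i \<longleftrightarrow> (\<exists>n. x = w ^ n \<and> n mod 4 = i)"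
proof
  assume "i < 4" "x \<in> cyc_class w 4 i"
  then obtain j where "x = w ^ (i + 4 * j)" by (auto simp: cyc_class_def)
  thus "\<exists>n. x = w ^ n \<and> n mod 4 = i" using \<open>i < 4\<close> by (intro exI[of _ "i + 4 * j"]) auto
next
  assume "i < 4" "\<exists>n. x = w ^ n \<and> n mod 4 = i"
  then obtain n where "x = w ^ n" "n mod 4 = i" by auto
  moreover have "n = i + 4 * (n div 4)" using \<open>n mod 4 = i\<close> by presburger
  ultimately have "x = w ^ (i + 4 * (n div 4))" by simp
  thus "x \<in> cyc_class w 4 i" unfolding cyc_class_def by blast
qed

lemma cyc_pow: "i < 4 \<Longrightarrow> w ^ n \<in> cyc_class w 4 i \<longleftrightarrow> n mod 4 = i"
proof
  assume i: "i < 4" and "w ^ n \<in> cyc_class w 4 i"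
  then obtain m where e: "w ^ n = w ^ m" and m: "m mod 4 = i" using cyc_mem by blast
  have "n mod 4 = m mod 4" using pw4 e by blast
  thus "n mod 4 = i" using m by simp
next
  assume i: "i < 4" and "n mod 4 = i"
  hence "\<exists>m. w ^ n = w ^ m \<and> m mod 4 = i" by (intro exI[of _ n]) simp
  thus "w ^ n \<in> cyc_class w 4 i" using cyc_mem i by blast
qed

lemma D0_pow: "w ^ n \<in> Dset w 0 \<longleftrightarrow> n mod 4 < 2"
proof -
  have eq: "Dset w 0 = cyc_class w 4 0 \<union> cyc_class w 4 1" by (simp add: Dset_def)
  have a: "w ^ n \<in> cyc_class w 4 0 \<longleftrightarrow> n mod 4 = 0" by (rule cyc_pow) simp
  have b: "w ^ n \<in> cyc_class w 4 1 \<longleftrightarrow> n mod 4 = 1" by (rule cyc_pow) simp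
  have "w ^ n \<in> Dset w 0 \<longleftrightarrow> n mod 4 = 0 \<or> n mod 4 = 1" by (simp only: eq Un_iff a b)
  also have "\<dots> \<longleftrightarrow> n mod 4 < 2" by linarith
  finally show ?thesis .
qed

lemma D2_pow: "w ^ n \<in> Dset w 2 \<longleftrightarrow> \<not> n mod 4 < 2"
proof -
  have eq: "Dset w 2 = cyc_class w 4 2 \<union> cyc_class w 4 3" by (simp add: Dset_def)
  have a: "w ^ n \<in> cyc_class w 4 2 \<longleftrightarrow> n mod 4 = 2" by (rule cyc_pow) simp
  have b: "w ^ n \<in> cyc_class w 4 3 \<longleftrightarrow> n mod 4 = 3" by (rule cyc_pow) simp
  have "w ^ n \<in> Dset w 2 \<longleftrightarrow> n mod 4 = 2 \<or> n mod 4 = 3" by (simp only: eq Un_iff a b)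
  also have "\<dots> \<longleftrightarrow> \<not> n mod 4 < 2" by presburger
  finally show ?thesis .
qed

lemma zero_notin_D: "0 \<notin> Dset w i"
proof -
  have "\<And>k. 0 \<noteq> w ^ k" using w0 by simp
  thus ?thesis unfolding Dset_def cyc_class_def by blast
qed

lemma D_part: "x \<noteq> 0 \<Longrightarrow> x \<in> Dset w 2 \<longleftrightarrow> x \<notin> Dset w 0"
  proof -
  assume "x \<noteq> 0"
  then obtain n where "x = w ^ n" using nz_pow by blast
  thus ?thesis using D0_pow D2_pow by simp
qed

lemma char_q: "\<exists>k. prime CHAR('a) \<and> q = CHAR('a) ^ k"
proof -
  obtain p k where p: "prime p" "k > 0" "q = p ^ k" using pp unfolding prime_power_def by blast
  have cpos: "CHAR('a) > 0" by (rule finite_imp_CHAR_pos) simp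
  have cp: "prime CHAR('a)" by (rule prime_CHAR_semidom[OF cpos])
  have d: "CHAR('a) dvd card (UNIV :: 'a set)" by (rule CHAR_dvd_CARD)
  have "card (UNIV :: 'a set) = p ^ (k * 2)" using cardF p(3) by (simp only: power_mult)
  hence "CHAR('a) dvd p ^ (k * 2)" using d by simp
  hence "CHAR('a) dvd p" using cp prime_dvd_power by metis
  hence "CHAR('a) = p" using cp p(1) primes_dvd_imp_eq by metis
  hence "prime CHAR('a) \<and> q = CHAR('a) ^ k" using cp p(3) by simp
  thus ?thesis ..
qed

lemma frob_add: "(x + y :: 'a) ^ q = x ^ q + y ^ q"
proof -
  obtain k where k: "prime CHAR('a)" "q = CHAR('a) ^ k" using char_q by blast
  show ?thesis by (rule freshmans_dream'[OF k])
qed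

lemma frob_minus: "(- x :: 'a) ^ q = - (x ^ q)"
  using q_odd by simp

definition K :: "'a set" where "K = {x. x ^ q = x}"

lemma K0: "0 \<in> K" using q_ge by (simp add: K_def)
lemma K1: "1 \<in> K" by (simp add: K_def)
lemma K_add: "x \<in> K \<Longrightarrow> y \<in> K \<Longrightarrow> x + y \<in> K" by (simp add: K_def frob_add)
lemma K_uminus: "x \<in> K \<Longrightarrow> - x \<in> K" by (simp add: K_def frob_minus)
lemma K_diff: "x \<in> K \<Longrightarrow> y \<in> K \<Longrightarrow> x - y \<in> K"
  using K_add[of x "- y"] K_uminus[of y] by simp
lemma K_mult: "x \<in> K \<Longrightarrow> y \<in> K \<Longrightarrow> x * y \<in> K" by (simp add: K_def power_mult_distrib)
lemma K_inverse: "x \<in> K \<Longrightarrow> inverse x \<in> K" by (simp add: K_def power_inverse)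
lemma K_divide: "x \<in> K \<Longrightarrow> y \<in> K \<Longrightarrow> x / y \<in> K"
  using K_mult K_inverse by (simp add: divide_inverse)

lemma K_pow: "t \<in> K \<Longrightarrow> t \<noteq> 0 \<Longrightarrow> \<exists>j. t = w ^ ((q + 1) * j)"
proof -
  assume t: "t \<in> K" "t \<noteq> 0"
  obtain n where n: "t = w ^ n" using nz_pow t(2) by blast
  have "w ^ (n * q) = w ^ n" using t(1) n by (simp add: K_def power_mult)
  hence "(n * q) mod (q^2 - 1) = n mod (q^2 - 1)" by (rule pw[THEN iffD1])
  moreover have "n \<le> n * q" using q_ge by simp
  ultimately have "(q^2 - 1) dvd (n * q - n)" by (metis mod_eq_dvd_iff_nat)
  moreover have "n * q - n = n * (q - 1)" by (simp add: diff_mult_distrib2)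
  ultimately have "(q - 1) * (q + 1) dvd n * (q - 1)" by (simp only: N_eq)
  hence "(q - 1) * (q + 1) dvd (q - 1) * n" by (simp add: mult.commute)
  hence "(q + 1) dvd n" using nat_mult_dvd_cancel1[of "q - 1" "q + 1" n] q_ge by auto
  then obtain j where "n = (q + 1) * j" by blast
  thus ?thesis using n by blast
qed


lemma pow_K: "w ^ ((q + 1) * j) \<in> K"
proof -
  have "(w ^ ((q + 1) * j)) ^ q = w ^ ((q + 1) * j * q)" by (simp add: power_mult)
  also have "(q + 1) * j * q = (q + 1) * j + j * (q^2 - 1)"
  proof -
    obtain r where r: "q = Suc r" using q_ge by (cases q) auto
    show ?thesis unfolding N_eq unfolding r by (simp add: algebra_simps)
  qed
  also have "w ^ \<dots> = w ^ ((q + 1) * j)" using pw by simp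
  finally show ?thesis by (simp add: K_def)
qed

lemma card_K: "card K = q"
proof -
  let ?f = "\<lambda>j. w ^ ((q + 1) * j)"
  have lt: "\<And>j. j < q - 1 \<Longrightarrow> (q + 1) * j < q^2 - 1"
  proof -
    fix j :: nat assume "j < q - 1"
    hence "(q + 1) * j < (q + 1) * (q - 1)" by (intro mult_strict_left_mono) auto
    also have "\<dots> = q^2 - 1" by (metis N_eq mult.commute)
    finally show "(q + 1) * j < q^2 - 1" .
  qed
  have "K = insert 0 (?f ` {..<q - 1})"
  proof (intro equalityI subsetI)
    fix t assume t: "t \<in> K"
    show "t \<in> insert 0 (?f ` {..<q - 1})"
    proof (cases "t = 0")
      case False
      then obtain j where j: "t = ?f j" using K_pow t by blast
      also have "\<dots> = ?f (j mod (q - 1))"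
      proof -
        have "(q + 1) * j mod ((q + 1) * (q - 1)) = (q + 1) * (j mod (q - 1))"
          by (rule mod_mult_mult1)
        moreover have "(q + 1) * (q - 1) = q^2 - 1" by (metis N_eq mult.commute)
        ultimately have "(q + 1) * j mod (q^2 - 1) = (q + 1) * (j mod (q - 1))" by simp
        hence "(q + 1) * j mod (q^2 - 1) = (q + 1) * (j mod (q - 1)) mod (q^2 - 1)"
          using lt[of "j mod (q - 1)"] q_ge by simp
        thus ?thesis by (rule pw[THEN iffD2])
      qed
      finally show ?thesis using q_ge by auto
    qed simp
  next
    fix t assume "t \<in> insert 0 (?f ` {..<q - 1})"
    thus "t \<in> K" using K0 pow_K by auto
  qed
  moreover have "inj_on ?f {..<q - 1}"
  proof (rule inj_onI)
    fix i j assume "i \<in> {..<q - 1}" "j \<in> {..<q - 1}" "?f i = ?f j"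
    hence "(q + 1) * i = (q + 1) * j" using pw lt by simp
    moreover have "q + 1 \<noteq> 0" by simp
    ultimately show "i = j" by (metis mult_left_cancel)
  qed
  moreover have "0 \<notin> ?f ` {..<q - 1}" using w0 by auto
  ultimately show ?thesis using q_ge by (simp add: card_image)
qed

lemma K_shift: "t \<in> K \<Longrightarrow> t \<noteq> 0 \<Longrightarrow> x = w ^ n \<Longrightarrow> \<exists>m. t * x = w ^ m \<and> m mod 4 = n mod 4"
proof -
  assume t: "t \<in> K" "t \<noteq> 0" and x: "x = w ^ n"
  obtain j where j: "t = w ^ ((q + 1) * j)" using K_pow t by blast
  have "4 dvd (q + 1)" using q3 by presburger
  then obtain c where c: "q + 1 = 4 * c" by blast
  have "((q + 1) * j + n) mod 4 = (n + 4 * (c * j)) mod 4" unfolding c by (simp add: algebra_simps)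
  also have "\<dots> = n mod 4" by (rule mod_mult_self2)
  finally have "((q + 1) * j + n) mod 4 = n mod 4" .
  moreover have "t * x = w ^ ((q + 1) * j + n)" using j x by (simp add: power_add)
  ultimately show ?thesis by blast
qed

lemma K_D0: "x \<in> Dset w 0 \<Longrightarrow> t \<in> K \<Longrightarrow> t \<noteq> 0 \<Longrightarrow> t * x \<in> Dset w 0"
proof -
  assume x: "x \<in> Dset w 0" and t: "t \<in> K" "t \<noteq> 0"
  have "x \<noteq> 0" using x zero_notin_D by metis
  then obtain n where n: "x = w ^ n" using nz_pow by blast
  obtain m where "t * x = w ^ m" "m mod 4 = n mod 4" using K_shift[OF t n] by blast
  thus ?thesis using x n D0_pow by simp
qed

lemma K_D2: "x \<in> Dset w 2 \<Longrightarrow> t \<in> K \<Longrightarrow> t \<noteq> 0 \<Longrightarrow> t * x \<in> Dset w 2"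
proof -
  assume x: "x \<in> Dset w 2" and t: "t \<in> K" "t \<noteq> 0"
  have "x \<noteq> 0" using x zero_notin_D by metis
  then obtain n where n: "x = w ^ n" using nz_pow by blast
  obtain m where "t * x = w ^ m" "m mod 4 = n mod 4" using K_shift[OF t n] by blast
  thus ?thesis using x n D2_pow by simp
qed

lemma card_D: "2 * card (Dset w 0) = q^2 - 1" "2 * card (Dset w 2) = q^2 - 1"
proof -
  have e: "card (Dset w 0) = card (Dset w 2)"
  proof (rule card_by_inverse[of _ "\<lambda>x. w^2 * x" _ "\<lambda>x. x / w^2"])
    fix x assume "x \<in> Dset w 0"
    moreover from this have "x \<noteq> 0" using zero_notin_D by metis
    then obtain n where "x = w ^ n" using nz_pow by blast
    moreover from this have "n mod 4 < 2" using \<open>x \<in> Dset w 0\<close> D0_pow by simp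
    ultimately have "x = w ^ n" "n mod 4 < 2" by auto
    moreover have "(n + 2) mod 4 \<ge> 2" using \<open>n mod 4 < 2\<close> by presburger
    moreover have eq: "w^2 * x = w ^ (n + 2)" using \<open>x = w ^ n\<close> by (simp add: power_add mult.commute power2_eq_square)
    ultimately have "w ^ (n + 2) \<in> Dset w 2" using D2_pow[of "n + 2"] by linarith
    thus "w^2 * x \<in> Dset w 2" using eq by metis
  next
    fix x assume "x \<in> Dset w 2"
    moreover from this have "x \<noteq> 0" using zero_notin_D by metis
    then obtain n where n0: "x = w ^ n" using nz_pow by blast
    moreover from this have "\<not> n mod 4 < 2" using \<open>x \<in> Dset w 2\<close> D2_pow by simp
    ultimately have n: "x = w ^ n" "\<not> n mod 4 < 2" by auto
    have "n mod 4 \<le> n" by (rule mod_less_eq_dividend)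
    hence "n \<ge> 2" using n(2) by linarith
    have "w ^ (n - 2) * w ^ 2 = w ^ (n - 2 + 2)" by (simp only: power_add)
    moreover have "n - 2 + 2 = n" using \<open>n \<ge> 2\<close> by simp
    ultimately have "w ^ n = w ^ (n - 2) * w ^ 2" by (simp only:)
    hence xe: "x = w ^ (n - 2) * w ^ 2" using n(1) by (simp only:)
    have "w ^ 2 \<noteq> 0" using w0 by simp
    hence xd: "x / w^2 = w ^ (n - 2)" unfolding xe by (rule nonzero_mult_div_cancel_right)
    obtain k where k: "n = k + 2" using \<open>n \<ge> 2\<close> le_Suc_ex by (metis add.commute)
    have "\<not> (k + 2) mod 4 < 2" using n(2) k by simp
    hence "k mod 4 < 2" by presburger
    hence "(n - 2) mod 4 < 2" using k by simp
    hence "w ^ (n - 2) \<in> Dset w 0" by (rule D0_pow[THEN iffD2])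
    thus "x / w^2 \<in> Dset w 0" by (simp only: xd)
  next
    fix x show "w^2 * x / w^2 = x" using w0 by simp
  next
    fix x show "w^2 * (x / w^2) = x" using w0 by simp
  qed
  have "Dset w 0 \<union> Dset w 2 = UNIV - {0}"
  proof (intro equalityI subsetI)
    fix x assume "x \<in> Dset w 0 \<union> Dset w 2"
    thus "x \<in> UNIV - {0}" using zero_notin_D[of 0] zero_notin_D[of 2] by auto
  next
    fix x :: 'a assume "x \<in> UNIV - {0}"
    thus "x \<in> Dset w 0 \<union> Dset w 2" using D_part[of x] by auto
  qed
  moreover have "Dset w 0 \<inter> Dset w 2 = {}"
  proof (intro equalityI subsetI)
    fix x assume x: "x \<in> Dset w 0 \<inter> Dset w 2"
    hence "x \<noteq> 0" using zero_notin_D[of 0] by auto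
    thus "x \<in> {}" using D_part[of x] x by auto
  qed simp
  ultimately have "card (Dset w 0) + card (Dset w 2) = card (UNIV - {0::'a})"
    using card_Un_disjoint[of "Dset w 0" "Dset w 2"] by simp
  also have "\<dots> = q^2 - 1" using cardF by (simp add: card_Diff_singleton)
  finally show "2 * card (Dset w 0) = q^2 - 1" "2 * card (Dset w 2) = q^2 - 1" using e by simp_all
qed

end



context ffs begin

lemma count_main:
  fixes D :: "'a set" and g :: 'a
  assumes D0: "0 \<notin> D" and Dcl: "\<And>x t. x \<in> D \<Longrightarrow> t \<in> K \<Longrightarrow> t \<noteq> 0 \<Longrightarrow> t * x \<in> D"
    and cD: "2 * card D = q^2 - 1" and g: "g \<noteq> 0"
  shows "4 * card {x. x \<in> D \<and> x - g \<in> D} + (if g \<in> D then 5 else 1) = q^2"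
proof -
  have Dcl': "\<And>x t. t \<in> K \<Longrightarrow> t \<noteq> 0 \<Longrightarrow> t * x \<in> D \<longleftrightarrow> x \<in> D"
  proof
    fix x t assume t: "t \<in> K" "t \<noteq> 0" and "t * x \<in> D"
    hence "inverse t * (t * x) \<in> D" using Dcl K_inverse by simp
    thus "x \<in> D" using t by (simp add: field_simps)
  qed (use Dcl in auto)
  have finK: "finite K" by simp
  have "card ((\<lambda>t. t * g) ` K) \<le> q" using card_image_le[OF finK, of "\<lambda>t. t * g"] card_K by simp
  moreover have "q < q^2" using q_ge by (simp add: power2_eq_square)
  ultimately have "(\<lambda>t. t * g) ` K \<noteq> UNIV" using cardF by auto
  then obtain a where a: "\<And>t. t \<in> K \<Longrightarrow> a \<noteq> t * g" by auto
  define P where "P = (\<lambda>(s, t). s * g + t * (a::'a))"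
  have injP: "inj_on P (K \<times> K)"
  proof (rule inj_onI, clarify)
    fix s t s' t' assume st: "s \<in> K" "t \<in> K" "s' \<in> K" "t' \<in> K" and e: "P (s, t) = P (s', t')"
    have e': "(s - s') * g = (t' - t) * a" using e by (simp add: P_def algebra_simps)
    show "s = s' \<and> t = t'"
    proof (cases "t = t'")
      case True
      thus ?thesis using e' g by simp
    next
      case False
      hence "a = ((s - s') / (t' - t)) * g" using e' by (simp add: field_simps)
      moreover have "(s - s') / (t' - t) \<in> K" using st by (intro K_divide K_diff)
      ultimately show ?thesis using a by blast
    qed
  qed
  have surjP: "P ` (K \<times> K) = UNIV"
  proof (rule card_subset_eq)
    show "card (P ` (K \<times> K)) = card (UNIV :: 'a set)"
      using card_image[OF injP] card_K cardF by (simp add: card_cartesian_product power2_eq_square)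
  qed auto
  define R where "R = {u \<in> K. u * g + a \<in> D}"
  have key: "\<And>s t c. s \<in> K \<Longrightarrow> t \<in> K \<Longrightarrow> t \<noteq> 0 \<Longrightarrow> c \<in> K \<Longrightarrow>
      ((s - c) * g + t * a \<in> D \<longleftrightarrow> (s - c) / t \<in> R)"
  proof -
    fix s t c assume st: "s \<in> K" "t \<in> K" "t \<noteq> 0" "c \<in> K"
    have "(s - c) * g + t * a = t * (((s - c) / t) * g + a)" using st(3) by (simp add: field_simps)
    hence "(s - c) * g + t * a \<in> D \<longleftrightarrow> ((s - c) / t) * g + a \<in> D" using Dcl' st by simp
    moreover have "(s - c) / t \<in> K" using st by (intro K_divide K_diff)
    ultimately show "((s - c) * g + t * a \<in> D \<longleftrightarrow> (s - c) / t \<in> R)" by (simp add: R_def)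
  qed
  have finR: "finite R" by simp
  have RK: "R \<subseteq> K" by (auto simp: R_def)
  have cntD: "card D = (if g \<in> D then q - 1 else 0) + card R * (q - 1)"
  proof -
    have "card D = card {x. x \<in> D}" by simp
    also have "\<dots> = card {st \<in> K \<times> K. P st \<in> D}" by (rule card_pull[OF injP surjP])
    also have "{st \<in> K \<times> K. P st \<in> D} = {st \<in> K \<times> K. P st \<in> D \<and> snd st = 0} \<union> {st \<in> K \<times> K. P st \<in> D \<and> snd st \<noteq> 0}"
      by auto
    also have "card \<dots> = card {st \<in> K \<times> K. P st \<in> D \<and> snd st = 0} + card {st \<in> K \<times> K. P st \<in> D \<and> snd st \<noteq> 0}"
      by (rule card_Un_disjoint) auto
    also have "card {st \<in> K \<times> K. P st \<in> D \<and> snd st = 0} = (if g \<in> D then q - 1 else 0)"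
    proof -
      have "card {st \<in> K \<times> K. P st \<in> D \<and> snd st = 0} = card {s \<in> K. s * g \<in> D}"
        by (rule card_by_inverse[of _ fst _ "\<lambda>s. (s, 0)"]) (auto simp: P_def K0)
      also have "{s \<in> K. s * g \<in> D} = (if g \<in> D then K - {0} else {})"
      proof -
        have "\<And>s. s \<in> K \<Longrightarrow> s * g \<in> D \<longleftrightarrow> s \<noteq> 0 \<and> g \<in> D"
        proof -
          fix s assume s: "s \<in> K"
          show "s * g \<in> D \<longleftrightarrow> s \<noteq> 0 \<and> g \<in> D"
            by (cases "s = 0") (use Dcl'[OF s] D0 in auto)
        qed
        thus ?thesis by auto
      qed
      finally show ?thesis using card_K K0 by (simp add: card_Diff_singleton)
    qed
    also have "card {st \<in> K \<times> K. P st \<in> D \<and> snd st \<noteq> 0} = card (R \<times> (K - {0}))"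
    proof (rule card_by_inverse[of _ "\<lambda>(s, t). (s / t, t)" _ "\<lambda>(u, t). (u * t, t)"])
      fix st assume "st \<in> {st \<in> K \<times> K. P st \<in> D \<and> snd st \<noteq> 0}"
      then obtain s t where st: "st = (s, t)" "s \<in> K" "t \<in> K" "t \<noteq> 0" "s * g + t * a \<in> D"
        by (auto simp: P_def)
      thus "(\<lambda>(s, t). (s / t, t)) st \<in> R \<times> (K - {0})" using key[of s t 0] K0 by simp
      show "(\<lambda>(u, t). (u * t, t)) ((\<lambda>(s, t). (s / t, t)) st) = st" using st by simp
    next
      fix ut assume "ut \<in> R \<times> (K - {0})"
      then obtain u t where ut: "ut = (u, t)" "u \<in> R" "t \<in> K" "t \<noteq> 0" by auto
      have "u \<in> K" using ut RK by auto
      hence "u * t \<in> K" using ut K_mult by simp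
      moreover have "(u * t) * g + t * a \<in> D" using key[of "u * t" t 0] ut \<open>u * t \<in> K\<close> K0 by simp
      ultimately show "(\<lambda>(u, t). (u * t, t)) ut \<in> {st \<in> K \<times> K. P st \<in> D \<and> snd st \<noteq> 0}"
        using ut by (simp add: P_def)
      show "(\<lambda>(s, t). (s / t, t)) ((\<lambda>(u, t). (u * t, t)) ut) = ut" using ut by simp
    qed
    also have "\<dots> = card R * (q - 1)" using card_K K0 by (simp add: card_cartesian_product)
    finally show ?thesis .
  qed
  have cntC: "card {x. x \<in> D \<and> x - g \<in> D} = (if g \<in> D then q - 2 else 0) + (card R * card R - card R)"
  proof -
    have Pg: "\<And>s t. P (s, t) - g = (s - 1) * g + t * a" by (simp add: P_def algebra_simps)
    have "card {x. x \<in> D \<and> x - g \<in> D} = card {st \<in> K \<times> K. P st \<in> D \<and> P st - g \<in> D}"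
      by (rule card_pull[OF injP surjP])
    also have "{st \<in> K \<times> K. P st \<in> D \<and> P st - g \<in> D} =
        {st \<in> K \<times> K. P st \<in> D \<and> P st - g \<in> D \<and> snd st = 0} \<union> {st \<in> K \<times> K. P st \<in> D \<and> P st - g \<in> D \<and> snd st \<noteq> 0}"
      by auto
    also have "card \<dots> = card {st \<in> K \<times> K. P st \<in> D \<and> P st - g \<in> D \<and> snd st = 0} + card {st \<in> K \<times> K. P st \<in> D \<and> P st - g \<in> D \<and> snd st \<noteq> 0}"
      by (rule card_Un_disjoint) auto
    also have "card {st \<in> K \<times> K. P st \<in> D \<and> P st - g \<in> D \<and> snd st = 0} = (if g \<in> D then q - 2 else 0)"
    proof -
      have "card {st \<in> K \<times> K. P st \<in> D \<and> P st - g \<in> D \<and> snd st = 0} = card {s \<in> K. s * g \<in> D \<and> (s - 1) * g \<in> D}"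
        by (rule card_by_inverse[of _ fst _ "\<lambda>s. (s, 0)"]) (auto simp: P_def K0 algebra_simps)
      also have "{s \<in> K. s * g \<in> D \<and> (s - 1) * g \<in> D} = (if g \<in> D then K - {0, 1} else {})"
      proof (cases "g \<in> D")
        case True
        have "\<And>s. s \<in> K \<Longrightarrow> (s * g \<in> D \<and> (s - 1) * g \<in> D) \<longleftrightarrow> s \<noteq> 0 \<and> s \<noteq> 1"
        proof -
          fix s assume s: "s \<in> K"
          have "s - 1 \<in> K" using s K1 K_diff by blast
          show "(s * g \<in> D \<and> (s - 1) * g \<in> D) \<longleftrightarrow> s \<noteq> 0 \<and> s \<noteq> 1"
            using Dcl'[OF s] Dcl'[OF \<open>s - 1 \<in> K\<close>] True D0 by (cases "s = 0"; cases "s = 1") auto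
        qed
        thus ?thesis using True by auto
      next
        case False
        have "\<And>s. s \<in> K \<Longrightarrow> s * g \<notin> D"
        proof -
          fix s assume s: "s \<in> K"
          show "s * g \<notin> D" by (cases "s = 0") (use Dcl'[OF s] D0 False in auto)
        qed
        thus ?thesis using False by auto
      qed
      finally show ?thesis using card_K K0 K1 by (simp add: card_Diff_subset numeral_2_eq_2)
    qed
    also have "card {st \<in> K \<times> K. P st \<in> D \<and> P st - g \<in> D \<and> snd st \<noteq> 0} = card {(u, v). u \<in> R \<and> v \<in> R \<and> u \<noteq> v}"
    proof (rule card_by_inverse[of _ "\<lambda>(s, t). (s / t, (s - 1) / t)" _ "\<lambda>(u, v). (u / (u - v), 1 / (u - v))"])
      fix st assume "st \<in> {st \<in> K \<times> K. P st \<in> D \<and> P st - g \<in> D \<and> snd st \<noteq> 0}"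
      then obtain s t where st0: "st = (s, t)" "s \<in> K" "t \<in> K" "t \<noteq> 0" "P (s, t) \<in> D" "P (s, t) - g \<in> D"
        by auto
      hence st: "st = (s, t)" "s \<in> K" "t \<in> K" "t \<noteq> 0" "s * g + t * a \<in> D" "(s - 1) * g + t * a \<in> D"
        unfolding Pg by (auto simp: P_def)
      have "s / t \<noteq> (s - 1) / t" using st(4) by (simp add: divide_cancel_right)
      thus "(\<lambda>(s, t). (s / t, (s - 1) / t)) st \<in> {(u, v). u \<in> R \<and> v \<in> R \<and> u \<noteq> v}"
        using key[of s t 0] key[of s t 1] st K0 K1 by simp
      have "s / t - (s - 1) / t = 1 / t" using st(4) by (simp add: field_simps)
      thus "(\<lambda>(u, v). (u / (u - v), 1 / (u - v))) ((\<lambda>(s, t). (s / t, (s - 1) / t)) st) = st"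
        using st(1,4) by simp
    next
      fix uv assume "uv \<in> {(u, v). u \<in> R \<and> v \<in> R \<and> u \<noteq> v}"
      then obtain u v where uv: "uv = (u, v)" "u \<in> R" "v \<in> R" "u \<noteq> v" by auto
      have uK: "u \<in> K" and vK: "v \<in> K" using uv RK by auto
      have d: "u - v \<noteq> 0" using uv by simp
      define s where "s = u / (u - v)"
      define t where "t = 1 / (u - v)"
      have sK: "s \<in> K" unfolding s_def using uK vK by (intro K_divide K_diff)
      have tK: "t \<in> K" unfolding t_def using uK vK K1 by (intro K_divide K_diff)
      have t0: "t \<noteq> 0" using d by (simp add: t_def)
      have e1: "(s - 0) / t = u" using d by (simp add: s_def t_def)
      have e2: "(s - 1) / t = v" using d by (simp add: s_def t_def field_simps)
      have "s * g + t * a \<in> D" using key[OF sK tK t0 K0] e1 uv by simp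
      moreover have "(s - 1) * g + t * a \<in> D" using key[OF sK tK t0 K1] e2 uv by simp
      ultimately have "P (s, t) \<in> D" "P (s, t) - g \<in> D" unfolding Pg by (simp_all add: P_def)
      moreover have "(\<lambda>(u, v). (u / (u - v), 1 / (u - v))) uv = (s, t)" using uv by (simp add: s_def t_def)
      ultimately show "(\<lambda>(u, v). (u / (u - v), 1 / (u - v))) uv \<in> {st \<in> K \<times> K. P st \<in> D \<and> P st - g \<in> D \<and> snd st \<noteq> 0}"
        using sK tK t0 by simp
      show "(\<lambda>(s, t). (s / t, (s - 1) / t)) ((\<lambda>(u, v). (u / (u - v), 1 / (u - v))) uv) = uv"
        using uv e1 e2 by (simp add: s_def t_def)
    qed
    also have "\<dots> = card R * card R - card R" by (rule card_offdiag[OF finR])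
    finally show ?thesis .
  qed
  show ?thesis
  proof (cases "g \<in> D")
    case True
    have "2 * ((q - 1) + card R * (q - 1)) = (q - 1) * (q + 1)" using cD cntD True N_eq by simp
    hence "(q - 1) * (2 * (1 + card R)) = (q - 1) * (q + 1)" by (simp add: algebra_simps)
    moreover have nz: "q - 1 \<noteq> 0" using q_ge by simp
    ultimately have "2 * (1 + card R) = q + 1" by (simp only: mult_left_cancel[OF nz])
    hence r: "q = 2 * card R + 1" by simp
    obtain r' where r': "card R = Suc r'" using r q_ge by (cases "card R") auto
    have h: "Suc r' * Suc r' - Suc r' = Suc r' * r'" by simp
    have h2: "q - 2 = 2 * r' + 1" using r r' by simp
    show ?thesis using cntC True unfolding r' h h2 unfolding r r' by (simp add: power2_eq_square algebra_simps)
  next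
    case False
    have "2 * (card R * (q - 1)) = (q - 1) * (q + 1)" using cD cntD False N_eq by simp
    hence "(q - 1) * (2 * card R) = (q - 1) * (q + 1)" by (simp add: algebra_simps)
    moreover have nz: "q - 1 \<noteq> 0" using q_ge by simp
    ultimately have "2 * card R = q + 1" by (simp only: mult_left_cancel[OF nz])
    hence r: "q + 1 = 2 * card R" by simp
    obtain r' where r': "card R = Suc r'" using r q_ge by (cases "card R") auto
    have h: "Suc r' * Suc r' - Suc r' = Suc r' * r'" by simp
    have q': "q = 2 * r' + 1" using r r' by simp
    show ?thesis using cntC False unfolding r' h unfolding q' by (simp add: power2_eq_square algebra_simps)
  qed
qed

end



lemma ex2: "(x::2) = 0 \<or> x = 1"
proof (rule bit0_cases[of x])
  fix z assume h: "x = of_int z" "0 \<le> z" "z < int CARD(num1 bit0)"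
  hence "0 \<le> z" "z < 2" by simp_all
  hence "z = 0 \<or> z = 1" by linarith
  thus ?thesis using h by auto
qed

lemma gr_alt: "gr_coeff X Y z = card {y \<in> Y. y + z \<in> X}"
  unfolding gr_coeff_def
  by (rule card_by_inverse[of _ snd _ "\<lambda>y. (y + z, y)"]) (auto simp: algebra_simps)

lemma gr_alt2: "gr_coeff X Y z = card {x \<in> X. x - z \<in> Y}"
  unfolding gr_coeff_def
  by (rule card_by_inverse[of _ fst _ "\<lambda>x. (x, x - z)"]) (auto simp: algebra_simps)

lemma gr_compl_left:
  fixes X Y :: "'a::{ab_group_add,finite} set"
  shows "int (gr_coeff (- X) Y z) = int (card Y) - int (gr_coeff X Y z)"
proof -
  have "{y \<in> Y. y + z \<in> - X} = Y - {y \<in> Y. y + z \<in> X}" by auto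
  hence "card {y \<in> Y. y + z \<in> - X} = card Y - card {y \<in> Y. y + z \<in> X}"
    by (simp add: card_Diff_subset)
  moreover have "card {y \<in> Y. y + z \<in> X} \<le> card Y" by (rule card_mono) auto
  ultimately show ?thesis unfolding gr_alt by simp
qed

lemma gr_compl_right:
  fixes X Y :: "'a::{ab_group_add,finite} set"
  shows "int (gr_coeff X (- Y) z) = int (card X) - int (gr_coeff X Y z)"
proof -
  have "{x \<in> X. x - z \<in> - Y} = X - {x \<in> X. x - z \<in> Y}" by auto
  hence "card {x \<in> X. x - z \<in> - Y} = card X - card {x \<in> X. x - z \<in> Y}"
    by (simp add: card_Diff_subset)
  moreover have "card {x \<in> X. x - z \<in> Y} \<le> card X" by (rule card_mono) auto
  ultimately show ?thesis unfolding gr_alt2 by simp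
qed

lemma gr_zero: "gr_coeff X X 0 = card X"
  unfolding gr_alt by simp

lemma card_compl:
  fixes X :: "'a::finite set"
  shows "int (card (- X)) = int CARD('a) - int (card X)"
proof -
  have "card (- X) = card (UNIV - X)" by (simp add: Compl_eq_Diff_UNIV)
  also have "\<dots> = CARD('a) - card X" by (simp add: card_Diff_subset)
  finally show ?thesis using card_mono[of UNIV X] by simp
qed

lemma gr_diag:
  fixes X :: "'a::{ab_group_add,finite} set"
  shows "z \<noteq> 0 \<Longrightarrow> card {(x, y). x \<in> X \<and> y \<in> X \<and> x \<noteq> y \<and> x - y = z} = gr_coeff X X z"
  unfolding gr_coeff_def by (rule arg_cong[where f=card]) auto

definition blk :: "'a set \<Rightarrow> 'a set \<Rightarrow> (2 \<times> 'a) set" where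
  "blk X Y = {(0::2, x) | x. x \<in> X} \<union> {(1::2, x) | x. x \<in> Y}"

lemma blk_card:
  fixes X Y :: "'a::finite set"
  shows "card (blk X Y) = card X + card Y"
proof -
  have "blk X Y = (\<lambda>x. (0::2, x)) ` X \<union> (\<lambda>x. (1::2, x)) ` Y" unfolding blk_def by auto
  moreover have "card ((\<lambda>x. (0::2, x)) ` X) = card X" by (rule card_image) (auto intro: inj_onI)
  moreover have "card ((\<lambda>x. (1::2, x)) ` Y) = card Y" by (rule card_image) (auto intro: inj_onI)
  moreover have "(\<lambda>x. (0::2, x)) ` X \<inter> (\<lambda>x. (1::2, x)) ` Y = {}" by auto
  ultimately show ?thesis by (simp add: card_Un_disjoint)
qed

lemma blk_diff0:
  fixes X Y :: "'a::{ab_group_add,finite} set"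
  assumes "z \<noteq> 0"
  shows "card {(u, v). u \<in> blk X Y \<and> v \<in> blk X Y \<and> u \<noteq> v \<and> u - v = (0, z)}
     = gr_coeff X X z + gr_coeff Y Y z"
proof -
  let ?A = "{(x, y). x \<in> X \<and> y \<in> X \<and> x - y = z}"
  let ?B = "{(x, y). x \<in> Y \<and> y \<in> Y \<and> x - y = z}"
  let ?f = "\<lambda>(x, y). ((0::2, x), (0::2, y))"
  let ?g = "\<lambda>(x, y). ((1::2, x), (1::2, y))"
  have "{(u, v). u \<in> blk X Y \<and> v \<in> blk X Y \<and> u \<noteq> v \<and> u - v = (0, z)} = ?f ` ?A \<union> ?g ` ?B"
    unfolding blk_def using assms by auto
  moreover have "card (?f ` ?A) = card ?A" by (rule card_image) (auto intro: inj_onI)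
  moreover have "card (?g ` ?B) = card ?B" by (rule card_image) (auto intro: inj_onI)
  moreover have "?f ` ?A \<inter> ?g ` ?B = {}" by auto
  ultimately show ?thesis unfolding gr_coeff_def by (simp add: card_Un_disjoint)
qed

lemma blk_diff1:
  fixes X Y :: "'a::{ab_group_add,finite} set"
  shows "card {(u, v). u \<in> blk X Y \<and> v \<in> blk X Y \<and> u \<noteq> v \<and> u - v = (1, z)}
     = gr_coeff X Y z + gr_coeff Y X z"
proof -
  let ?A = "{(x, y). x \<in> X \<and> y \<in> Y \<and> x - y = z}"
  let ?B = "{(x, y). x \<in> Y \<and> y \<in> X \<and> x - y = z}"
  let ?f = "\<lambda>(x, y). ((0::2, x), (1::2, y))"
  let ?g = "\<lambda>(x, y). ((1::2, x), (0::2, y))"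
  have "{(u, v). u \<in> blk X Y \<and> v \<in> blk X Y \<and> u \<noteq> v \<and> u - v = (1, z)} = ?f ` ?A \<union> ?g ` ?B"
    unfolding blk_def by auto
  moreover have "card (?f ` ?A) = card ?A" by (rule card_image) (auto intro: inj_onI)
  moreover have "card (?g ` ?B) = card ?B" by (rule card_image) (auto intro: inj_onI)
  moreover have "?f ` ?A \<inter> ?g ` ?B = {}" by auto
  ultimately show ?thesis unfolding gr_coeff_def by (simp add: card_Un_disjoint)
qed



context ffs begin

lemma cnt:
  assumes "z \<noteq> 0" "i = 0 \<or> i = 2"
  shows "4 * int (gr_coeff (Dset w i) (Dset w i) z) + (if z \<in> Dset w i then 5 else 1) = int q ^ 2"
proof -
  have h: "0 \<notin> Dset w i" "\<And>x t. x \<in> Dset w i \<Longrightarrow> t \<in> K \<Longrightarrow> t \<noteq> 0 \<Longrightarrow> t * x \<in> Dset w i"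
    "2 * card (Dset w i) = q^2 - 1"
    using assms(2) zero_notin_D K_D0 K_D2 card_D by auto
  have "4 * card {x. x \<in> Dset w i \<and> x - z \<in> Dset w i} + (if z \<in> Dset w i then 5 else 1) = q^2"
    by (rule count_main[OF h assms(1)])
  moreover have "card {x. x \<in> Dset w i \<and> x - z \<in> Dset w i} = gr_coeff (Dset w i) (Dset w i) z"
    by (simp add: gr_alt2)
  ultimately have "4 * gr_coeff (Dset w i) (Dset w i) z + (if z \<in> Dset w i then 5 else 1) = q^2" by simp
  hence "int (4 * gr_coeff (Dset w i) (Dset w i) z + (if z \<in> Dset w i then 5 else 1)) = int (q^2)" by simp
  thus ?thesis by (cases "z \<in> Dset w i") simp_all
qed

end

lemma gr_cc:
  fixes X :: "'a::{ab_group_add,finite} set"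
  shows "int (gr_coeff (- X) (- X) z) = int (card (- X)) - int (card X) + int (gr_coeff X X z)"
  using gr_compl_left[of X "- X" z] gr_compl_right[of X X z] by simp

theorem proposition2p3:
  fixes w :: "'a::{field,finite}" and q :: nat
    and E0 E1 E2 E3 :: "'a set"
  assumes "prime_power q" and "q mod 4 = 3"
    and "CARD('a) = q ^ 2"
    and "primitive_elem w"
    and "card E0 = (q^2 - q) div 2" and "card E1 = (q^2 - q) div 2"
    and "card E2 = (q^2 - q) div 2" and "card E3 = (q^2 - q) div 2"
    and "\<exists>lam. difference_family [E0, E1, E2, E3] lam \<and> type_H [E0, E1, E2, E3] lam"
    and "\<forall>g. int (gr_coeff E0 E1 g + gr_coeff E1 E0 g + gr_coeff E2 E3 g + gr_coeff E3 E2 g)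
            = (int q - 1)^2 + 2 * (if g \<in> Dset w 0 then 1 else 0)
                             - 2 * (if g \<in> Dset w 2 then 1 else 0)"
  shows "difference_family_params
     [{(0::2, x) | x. x \<in> Dset w 0} \<union> {(1::2, x) | x. x \<notin> Dset w 0},
      {(0::2, x) | x. x \<in> Dset w 2} \<union> {(1::2, x) | x. x \<in> Dset w 2},
      {(0::2, x) | x. x \<in> E0} \<union> {(1::2, x) | x. x \<notin> E1},
      {(0::2, x) | x. x \<in> E2} \<union> {(1::2, x) | x. x \<notin> E3}]
     (2 * q^2) [q^2, q^2 - 1, q^2, q^2] (2 * q^2 - 2)"
proof -
  interpret ffs w q using assms(1-4) by unfold_locales
  define D0 where "D0 = Dset w 0"
  define D2 where "D2 = Dset w 2"
  have B: "{(0::2, x) | x. x \<in> Dset w 0} \<union> {(1::2, x) | x. x \<notin> Dset w 0} = blk D0 (- D0)"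
     "{(0::2, x) | x. x \<in> Dset w 2} \<union> {(1::2, x) | x. x \<in> Dset w 2} = blk D2 D2"
     "{(0::2, x) | x. x \<in> E0} \<union> {(1::2, x) | x. x \<notin> E1} = blk E0 (- E1)"
     "{(0::2, x) | x. x \<in> E2} \<union> {(1::2, x) | x. x \<notin> E3} = blk E2 (- E3)"
    by (auto simp: blk_def D0_def D2_def)
  define e where "e = (q^2 - q) div 2"
  have qq: "q \<le> q^2" by (simp add: power2_eq_square)
  have ev: "even (q^2 - q)"
  proof -
    have "q^2 - q = q * (q - 1)" by (simp add: power2_eq_square diff_mult_distrib2)
    moreover have "even (q - 1)" using q_odd q_ge by simp
    ultimately show ?thesis by simp
  qed
  have e2: "2 * int e = int q ^ 2 - int q"
  proof -
    have "2 * e = q^2 - q" using ev by (simp add: e_def)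
    hence "int (2 * e) = int (q^2 - q)" by simp
    thus ?thesis using qq by (simp add: of_nat_diff)
  qed
  have cE: "card E0 = e" "card E1 = e" "card E2 = e" "card E3 = e" using assms(5-8) e_def by simp_all
  have cF: "CARD('a) = q^2" by (rule assms(3))
  have cD: "2 * int (card D0) = int q ^ 2 - 1" "2 * int (card D2) = int q ^ 2 - 1"
  proof -
    have "q^2 \<ge> 1" using q_ge by simp
    thus "2 * int (card D0) = int q ^ 2 - 1" "2 * int (card D2) = int q ^ 2 - 1"
      using card_D unfolding D0_def D2_def by (metis of_nat_diff of_nat_mult of_nat_numeral of_nat_power of_nat_1)+
  qed
  obtain lam where df: "difference_family [E0, E1, E2, E3] lam" and tH: "type_H [E0, E1, E2, E3] lam"
    using assms(9) by blast
  have lam: "int lam = 4 * int e - int q ^ 2"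
    using tH cE cF by (simp add: type_H_def)
  have cC: "\<And>X :: 'a set. int (card (- X)) = int q ^ 2 - int (card X)"
  proof -
    fix X :: "'a set"
    show "int (card (- X)) = int q ^ 2 - int (card X)" using card_compl[of X] cF by simp
  qed
  show ?thesis
    unfolding B difference_family_params_def
  proof (intro conjI)
    show "CARD(2 \<times> 'a) = 2 * q^2" using cF by simp
    show "length [blk D0 (- D0), blk D2 D2, blk E0 (- E1), blk E2 (- E3)] = length [q^2, q^2 - 1, q^2, q^2]"
      by simp
    have c1: "card (blk D0 (- D0)) = q^2"
    proof -
      have "int (card (blk D0 (- D0))) = int (q^2)" unfolding blk_card using cC[of D0] by simp
      thus ?thesis by simp
    qed
    have c2: "card (blk D2 D2) = q^2 - 1"
    proof -
      have "int (card (blk D2 D2)) = int q ^ 2 - 1" unfolding blk_card using cD by simp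
      moreover have h1: "int (q^2 - 1) = int q ^ 2 - 1" using q_ge by (simp add: of_nat_diff)
      ultimately have "int (card (blk D2 D2)) = int (q^2 - 1)" by simp
      thus ?thesis by (simp only: of_nat_eq_iff)
    qed
    have c3: "card (blk E0 (- E1)) = q^2"
    proof -
      have "int (card (blk E0 (- E1))) = int (q^2)" unfolding blk_card using cC[of E1] cE by simp
      thus ?thesis by simp
    qed
    have c4: "card (blk E2 (- E3)) = q^2"
    proof -
      have "int (card (blk E2 (- E3))) = int (q^2)" unfolding blk_card using cC[of E3] cE by simp
      thus ?thesis by simp
    qed
    show "\<forall>i<length [blk D0 (- D0), blk D2 D2, blk E0 (- E1), blk E2 (- E3)].
        card ([blk D0 (- D0), blk D2 D2, blk E0 (- E1), blk E2 (- E3)] ! i) = [q^2, q^2 - 1, q^2, q^2] ! i"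
    proof (intro allI impI)
      fix i assume "i < length [blk D0 (- D0), blk D2 D2, blk E0 (- E1), blk E2 (- E3)]"
      hence "i = 0 \<or> i = 1 \<or> i = 2 \<or> i = 3" by auto
      thus "card ([blk D0 (- D0), blk D2 D2, blk E0 (- E1), blk E2 (- E3)] ! i) = [q^2, q^2 - 1, q^2, q^2] ! i"
        using c1 c2 c3 c4 by auto
    qed
    show "difference_family [blk D0 (- D0), blk D2 D2, blk E0 (- E1), blk E2 (- E3)] (2 * q^2 - 2)"
      unfolding difference_family_def
    proof (intro allI impI)
      fix g :: "2 \<times> 'a" assume g: "g \<noteq> 0"
      obtain a z where gz: "g = (a, z)" by (cases g)
      let ?c = "\<lambda>B. card {(x, y). x \<in> B \<and> y \<in> B \<and> x \<noteq> y \<and> x - y = g}"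
      have h22: "int (2 * q^2 - 2) = 2 * int q ^ 2 - 2" using q_ge by (simp add: of_nat_diff)
      have sq: "(int q - 1)^2 = int q ^ 2 - 2 * int q + 1" by (simp add: power2_eq_square algebra_simps)
      have part: "\<And>x. x \<noteq> 0 \<Longrightarrow> x \<in> D2 \<longleftrightarrow> x \<notin> D0" "0 \<notin> D0" "0 \<notin> D2"
        using D_part zero_notin_D unfolding D0_def D2_def by auto
      have main: "int (?c (blk D0 (- D0)) + ?c (blk D2 D2) + ?c (blk E0 (- E1)) + ?c (blk E2 (- E3)))
          = 2 * int q ^ 2 - 2"
      proof (cases "a = 0")
        case True
        have z0: "z \<noteq> 0" using g gz True by (auto simp: zero_prod_def)
        have cs: "?c (blk D0 (- D0)) = gr_coeff D0 D0 z + gr_coeff (- D0) (- D0) z"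
          "?c (blk D2 D2) = gr_coeff D2 D2 z + gr_coeff D2 D2 z"
          "?c (blk E0 (- E1)) = gr_coeff E0 E0 z + gr_coeff (- E1) (- E1) z"
          "?c (blk E2 (- E3)) = gr_coeff E2 E2 z + gr_coeff (- E3) (- E3) z"
          unfolding gz True by (rule blk_diff0[OF z0])+
        have dfz: "int (gr_coeff E0 E0 z) + int (gr_coeff E1 E1 z) + int (gr_coeff E2 E2 z) + int (gr_coeff E3 E3 z) = int lam"
        proof -
          have "(z::'a) \<noteq> 0" by (rule z0)
          hence "(0::2, z) \<noteq> 0" by (simp add: zero_prod_def)
          hence "(\<Sum>B\<leftarrow>[E0, E1, E2, E3]. card {(x, y). x \<in> B \<and> y \<in> B \<and> x \<noteq> y \<and> x - y = z}) = lam"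
            using df z0 unfolding difference_family_def by blast
          hence "gr_coeff E0 E0 z + (gr_coeff E1 E1 z + (gr_coeff E2 E2 z + gr_coeff E3 E3 z)) = lam"
            by (simp add: gr_diag[OF z0])
          thus ?thesis by linarith
        qed
        have k0: "4 * int (gr_coeff D0 D0 z) + (if z \<in> D0 then 5 else 1) = int q ^ 2"
          unfolding D0_def by (rule cnt[OF z0]) simp
        have k2: "4 * int (gr_coeff D2 D2 z) + (if z \<in> D2 then 5 else 1) = int q ^ 2"
          unfolding D2_def by (rule cnt[OF z0]) simp
        have g1: "int (gr_coeff (- D0) (- D0) z) = int (card (- D0)) - int (card D0) + int (gr_coeff D0 D0 z)"
          by (rule gr_cc)
        have g2: "int (gr_coeff (- E1) (- E1) z) = int (card (- E1)) - int (card E1) + int (gr_coeff E1 E1 z)"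
          by (rule gr_cc)
        have g3: "int (gr_coeff (- E3) (- E3) z) = int (card (- E3)) - int (card E3) + int (gr_coeff E3 E3 z)"
          by (rule gr_cc)
        show ?thesis
        proof (cases "z \<in> D0")
          case True
          hence "z \<notin> D2" using part(1)[OF z0] by simp
          thus ?thesis using True k0 k2 g1 g2 g3 dfz cs cC[of D0] cC[of E1] cC[of E3] cD cE lam e2
            by simp
        next
          case False
          hence "z \<in> D2" using part(1)[OF z0] by simp
          thus ?thesis using False k0 k2 g1 g2 g3 dfz cs cC[of D0] cC[of E1] cC[of E3] cD cE lam e2
            by simp
        qed
      next
        case False
        hence a1: "a = 1" using ex2 by blast
        have cs: "?c (blk D0 (- D0)) = gr_coeff D0 (- D0) z + gr_coeff (- D0) D0 z"
          "?c (blk D2 D2) = gr_coeff D2 D2 z + gr_coeff D2 D2 z"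
          "?c (blk E0 (- E1)) = gr_coeff E0 (- E1) z + gr_coeff (- E1) E0 z"
          "?c (blk E2 (- E3)) = gr_coeff E2 (- E3) z + gr_coeff (- E3) E2 z"
          unfolding gz a1 by (rule blk_diff1)+
        have hz: "int (gr_coeff E0 E1 z) + int (gr_coeff E1 E0 z) + int (gr_coeff E2 E3 z) + int (gr_coeff E3 E2 z)
            = int q ^ 2 - 2 * int q + 1 + 2 * (if z \<in> D0 then 1 else 0) - 2 * (if z \<in> D2 then 1 else 0)"
          using assms(10)[rule_format, of z] sq unfolding D0_def D2_def by simp
        have g1: "int (gr_coeff D0 (- D0) z) = int (card D0) - int (gr_coeff D0 D0 z)"
          by (rule gr_compl_right)
        have g2: "int (gr_coeff (- D0) D0 z) = int (card D0) - int (gr_coeff D0 D0 z)"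
          by (rule gr_compl_left)
        have g3: "int (gr_coeff E0 (- E1) z) = int (card E0) - int (gr_coeff E0 E1 z)"
          by (rule gr_compl_right)
        have g4: "int (gr_coeff (- E1) E0 z) = int (card E0) - int (gr_coeff E1 E0 z)"
          by (rule gr_compl_left)
        have g5: "int (gr_coeff E2 (- E3) z) = int (card E2) - int (gr_coeff E2 E3 z)"
          by (rule gr_compl_right)
        have g6: "int (gr_coeff (- E3) E2 z) = int (card E2) - int (gr_coeff E3 E2 z)"
          by (rule gr_compl_left)
        show ?thesis
        proof (cases "z = 0")
          case True
          have n0: "z \<notin> D0" "z \<notin> D2" using True part by simp_all
          have hz': "int (gr_coeff E0 E1 z) + int (gr_coeff E1 E0 z) + int (gr_coeff E2 E3 z) + int (gr_coeff E3 E2 z)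
            = int q ^ 2 - 2 * int q + 1" using hz n0 by simp
          have z1: "int (gr_coeff D0 D0 z) = int (card D0)" "int (gr_coeff D2 D2 z) = int (card D2)"
            using True gr_zero by simp_all
          have ce: "int (card E0) = int e" "int (card E2) = int e" using cE by simp_all
          show ?thesis unfolding cs of_nat_add
            using hz' g1 g2 g3 g4 g5 g6 z1 cD ce e2 by linarith
        next
          case z0: False
          have k0: "4 * int (gr_coeff D0 D0 z) + (if z \<in> D0 then 5 else 1) = int q ^ 2"
            unfolding D0_def by (rule cnt[OF z0]) simp
          have k2: "4 * int (gr_coeff D2 D2 z) + (if z \<in> D2 then 5 else 1) = int q ^ 2"
            unfolding D2_def by (rule cnt[OF z0]) simp
          show ?thesis
          proof (cases "z \<in> D0")
            case True
            hence "z \<notin> D2" using part(1)[OF z0] by simp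
            thus ?thesis using True cs hz g1 g2 g3 g4 g5 g6 k0 k2 cD cE e2 by simp
          next
            case False
            hence "z \<in> D2" using part(1)[OF z0] by simp
            thus ?thesis using False cs hz g1 g2 g3 g4 g5 g6 k0 k2 cD cE e2 by simp
          qed
        qed
      qed
      have "?c (blk D0 (- D0)) + ?c (blk D2 D2) + ?c (blk E0 (- E1)) + ?c (blk E2 (- E3)) = 2 * q^2 - 2"
        using main h22 by linarith
      thus "(\<Sum>B\<leftarrow>[blk D0 (- D0), blk D2 D2, blk E0 (- E1), blk E2 (- E3)]. ?c B) = 2 * q^2 - 2"
        by (simp add: add.assoc)
    qed
  qed
qed


end
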